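(* Let $C$ be a finite elementary abelian $p$-group ($p$ prime) and $k$ a positive integer; let $d=\log_p|C|$. Then there exists $t\ge k$ such that the direct product $P=\prod_{i=1}^tC_i$ of copies $C_i$ of $C$ contains a subgroup $R$, invariant under the diagonal action on $P$ of the endomorphism algebra $\mathrm{End}\,C\cong M_d(\mathbb{Z}/p\mathbb{Z})$, with the following properties: a) $R$ is contained in the union of the kernels $K_j$ of the natural projections $P\to C_j$, $j=1,\dots,t$; b) $R\cdot\prod_{j\notin J}C_j=P$ for every subset $J\subseteq\{1,\dots,t\}$ of cardinality $k$; b') moreover, every such $J$ is contained in a set $J'\supseteq J$ such that $P=R\times\prod_{j\notin J'}C_j$, and there exist integers $n_{ij}$ such that the projection $\pi:P\to\prod_{j\notin J'}C_j$ with kernel $R$ acts by $C_i\ni c_i\mapsto\prod_{j\notin J'}c_j^{n_{ij}}$, where $c_j\in C_j$ is the element corresponding to $c_i$ under the isomorphisms $C_i\cong C\cong C_j$. *)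

theory Defs
  imports "HOL-Algebra.Algebra"
begin

definition Pow_group :: "('a, 'b) monoid_scheme \<Rightarrow> nat \<Rightarrow> (nat \<Rightarrow> 'a) monoid" where
  "Pow_group C t = product_group {..<t} (\<lambda>_. C)"

definition coord_embed :: "('a, 'b) monoid_scheme \<Rightarrow> nat \<Rightarrow> nat \<Rightarrow> 'a \<Rightarrow> (nat \<Rightarrow> 'a)" where
  "coord_embed C t i c = (\<lambda>j\<in>{..<t}. if j = i then c else \<one>\<^bsub>C\<^esub>)"

definition diag_map :: "nat \<Rightarrow> ('a \<Rightarrow> 'a) \<Rightarrow> (nat \<Rightarrow> 'a) \<Rightarrow> (nat \<Rightarrow> 'a)" where
  "diag_map t \<phi> x = (\<lambda>j\<in>{..<t}. \<phi> (x j))"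

definition coord_subprod :: "('a, 'b) monoid_scheme \<Rightarrow> nat \<Rightarrow> nat set \<Rightarrow> (nat \<Rightarrow> 'a) set" where
  "coord_subprod C t S = {f \<in> carrier (Pow_group C t). \<forall>j\<in>{..<t} - S. f j = \<one>\<^bsub>C\<^esub>}"

end

theory Submission
  imports Defs "HOL-Library.Ramsey"
begin


locale elab = comm_group C for C (structure) +
  fixes p :: nat
  assumes p_prime: "Factorial_Ring.prime p" and fin: "finite (carrier C)"
    and expo: "\<forall>x\<in>carrier C. x [^] p = \<one>"
begin

lemma p_gt1: "p > 1" using p_prime prime_gt_1_nat by blast

lemma pow_mod: assumes "x \<in> carrier C" shows "x [^] (i mod p) = x [^] i"
proof -
  have "x [^] i = x [^] (p * (i div p) + i mod p)" by simp
  also have "\<dots> = (x [^] p) [^] (i div p) \<otimes> x [^] (i mod p)"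
    using assms by (simp add: nat_pow_mult nat_pow_pow)
  also have "\<dots> = x [^] (i mod p)" using assms expo by simp
  finally show ?thesis by simp
qed

lemma pow_cong: assumes "x \<in> carrier C" "i mod p = j mod p" shows "x [^] i = x [^] j"
  using pow_mod[OF assms(1), of i] pow_mod[OF assms(1), of j] assms(2) by simp

lemma inverse_mod: assumes "j mod p \<noteq> 0" obtains j' where "(j * j') mod p = 1"
proof -
  have "coprime j p"
    using assms p_prime by (metis dvd_eq_mod_eq_0 coprime_commute prime_imp_coprime)
  moreover have "j \<noteq> 0" using assms by (metis mod_0)
  ultimately obtain x y where "j * x = p * y + 1"
  proof -
    have "gcd j p = 1" using \<open>coprime j p\<close> by simp
    then show ?thesis using bezout_nat[of j p] \<open>j \<noteq> 0\<close> that by auto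
  qed
  then have "(j * x) mod p = (1 + p * y) mod p" by simp
  also have "\<dots> = 1" using p_gt1 by (simp only: mod_mult_self2) simp
  finally have "(j * x) mod p = 1" .
  then show ?thesis using that by blast
qed

lemma cancel_inv1 [simp]: "h \<in> carrier C \<Longrightarrow> y \<in> carrier C \<Longrightarrow> h \<otimes> (inv h \<otimes> y) = y"
  by (simp add: m_assoc[symmetric])

lemma cancel_inv2 [simp]: "h \<in> carrier C \<Longrightarrow> y \<in> carrier C \<Longrightarrow> inv h \<otimes> (h \<otimes> y) = y"
  by (simp add: m_assoc[symmetric])

lemma sub_pow_closed: assumes "subgroup H C" "x \<in> H" shows "x [^] (n::nat) \<in> H"
proof (induction n)
  case 0 then show ?case using assms subgroup.one_closed by simp
next
  case (Suc n)
  have "x \<in> carrier C" using assms subgroup.subset by blast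
  then show ?case using Suc assms subgroup.m_closed by (simp add: nat_pow_Suc)
qed

end


context elab begin
lemma complement:
  assumes a: "a \<in> carrier C" "a \<noteq> \<one>"
  obtains H where "subgroup H C" "a \<notin> H" "\<forall>x\<in>carrier C. \<exists>i. x \<otimes> a [^] (i::nat) \<in> H"
proof -
  define F where "F = {H. subgroup H C \<and> a \<notin> H}"
  have finF: "finite F"
  proof (rule finite_subset)
    show "F \<subseteq> Pow (carrier C)" unfolding F_def using subgroup.subset by blast
  qed (use fin in auto)
  have triv: "{\<one>} \<in> F" unfolding F_def using triv_subgroup a by auto
  define m where "m = Max (card ` F)"
  have "m \<in> card ` F" unfolding m_def using finF triv by (intro Max_in) auto
  then obtain H where HF: "H \<in> F" and cH: "card H = m" by auto
  have maxH: "card H' \<le> card H" if "H' \<in> F" for H'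
    using cH finF that unfolding m_def by (simp add: Max_ge)
  have Hsub: "subgroup H C" and aH: "a \<notin> H" using HF unfolding F_def by auto
  have HC: "H \<subseteq> carrier C" using Hsub subgroup.subset by blast
  have "\<exists>i. x \<otimes> a [^] (i::nat) \<in> H" if x: "x \<in> carrier C" for x
  proof (rule ccontr)
    assume nx: "\<not> (\<exists>i. x \<otimes> a [^] (i::nat) \<in> H)"
    define H' where "H' = {h \<otimes> x [^] (j::nat) | h j. h \<in> H}"
    have H'C: "H' \<subseteq> carrier C" unfolding H'_def using HC x by auto
    have memH': "h \<otimes> x [^] (j::nat) \<in> H'" if "h \<in> H" for h j
      unfolding H'_def using that by blast
    have sH': "subgroup H' C"
    proof (rule subgroupI)
      show "H' \<subseteq> carrier C" by (rule H'C)
      show "H' \<noteq> {}" using memH'[OF subgroup.one_closed[OF Hsub], of 0] by blast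
    next
      fix b assume "b \<in> H'"
      then obtain h j where b: "b = h \<otimes> x [^] (j::nat)" and h: "h \<in> H" unfolding H'_def by auto
      have hc: "h \<in> carrier C" using h HC by auto
      have "(inv h \<otimes> x [^] ((p - 1) * j)) \<otimes> b = (inv h \<otimes> h) \<otimes> (x [^] ((p - 1) * j) \<otimes> x [^] j)"
        using hc x b by (simp add: m_ac)
      also have "\<dots> = x [^] ((p - 1) * j + j)" using hc x by (simp add: nat_pow_mult)
      also have "(p - 1) * j + j = p * j" using p_gt1 by (simp add: algebra_simps)
      also have "x [^] (p * j) = \<one>" using x expo nat_pow_pow[of x p j] by simp
      finally have eq1: "(inv h \<otimes> x [^] ((p - 1) * j)) \<otimes> b = \<one>" .
      have bc: "b \<in> carrier C" using b hc x by simp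
      have "inv b = inv h \<otimes> x [^] ((p - 1) * j)"
        using eq1 bc hc x by (intro inv_equality) simp_all
      moreover have "inv h \<in> H" by (rule subgroup.m_inv_closed[OF Hsub h])
      ultimately show "inv b \<in> H'" using memH' by simp
    next
      fix b c assume "b \<in> H'" "c \<in> H'"
      then obtain h j h' j' where b: "b = h \<otimes> x [^] (j::nat)" and h: "h \<in> H"
        and c: "c = h' \<otimes> x [^] (j'::nat)" and h': "h' \<in> H" unfolding H'_def by auto
      have "b \<otimes> c = (h \<otimes> h') \<otimes> (x [^] j \<otimes> x [^] j')"
        using b c h h' HC x by (subgoal_tac "h \<in> carrier C \<and> h' \<in> carrier C") (auto simp: m_ac)
      also have "x [^] j \<otimes> x [^] j' = x [^] (j + j')" using x by (simp add: nat_pow_mult)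
      finally have "b \<otimes> c = (h \<otimes> h') \<otimes> x [^] (j + j')" .
      moreover have "h \<otimes> h' \<in> H" by (rule subgroup.m_closed[OF Hsub h h'])
      ultimately show "b \<otimes> c \<in> H'" using memH' by simp
    qed
    have HH': "H \<subseteq> H'"
    proof
      fix h assume "h \<in> H"
      then have "h = h \<otimes> x [^] (0::nat)" using HC by auto
      then show "h \<in> H'" using memH'[OF \<open>h \<in> H\<close>, of 0] by simp
    qed
    have xH': "x \<in> H'"
    proof -
      have "x = \<one> \<otimes> x [^] (1::nat)" using x by simp
      then show ?thesis using memH'[OF subgroup.one_closed[OF Hsub], of 1] x by simp
    qed
    have xH: "x \<notin> H" using nx[simplified, rule_format, of 0] x by auto
    have "a \<in> H'"
    proof (rule ccontr)
      assume "a \<notin> H'"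
      then have "H' \<in> F" unfolding F_def using sH' by auto
      moreover have "card H < card H'"
        using HH' xH' xH H'C fin by (intro psubset_card_mono) (auto intro: finite_subset)
      ultimately show False using maxH by fastforce
    qed
    then obtain h j where ahj: "a = h \<otimes> x [^] (j::nat)" and h: "h \<in> H" unfolding H'_def by auto
    have hc: "h \<in> carrier C" using h HC by auto
    show False
    proof (cases "j mod p = 0")
      case True
      then have "x [^] j = \<one>" using pow_mod[OF x, of j] by simp
      then show False using ahj hc aH h by simp
    next
      case False
      then obtain j' where jj: "(j * j') mod p = 1" using inverse_mod by blast
      have "a [^] j' = h [^] j' \<otimes> x [^] (j * j')"
        using ahj hc x by (simp add: nat_pow_distrib nat_pow_pow)
      also have "x [^] (j * j') = x" using pow_mod[OF x, of "j * j'"] jj x by simp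
      finally have aj: "a [^] j' = h [^] j' \<otimes> x" .
      have "x \<otimes> a [^] (j' * (p - 1)) = x \<otimes> (a [^] j') [^] (p - 1)"
        using a by (simp add: nat_pow_pow)
      also have "\<dots> = x \<otimes> ((h [^] j') [^] (p - 1) \<otimes> x [^] (p - 1))"
        using aj hc x by (simp add: nat_pow_distrib)
      also have "\<dots> = (h [^] j') [^] (p - 1) \<otimes> (x [^] (p - 1) \<otimes> x)"
        using hc x by (simp add: m_ac)
      also have "x [^] (p - 1) \<otimes> x = x [^] p"
        using x p_gt1 using nat_pow_Suc[of x "p - 1"] by (simp add: Suc_diff_1)
      also have "\<dots> = \<one>" using x expo by simp
      finally have "x \<otimes> a [^] (j' * (p - 1)) = (h [^] j') [^] (p - 1)" using hc by simp
      moreover have "(h [^] j') [^] (p - 1) \<in> H" by (intro sub_pow_closed[OF Hsub] h)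
      ultimately have "x \<otimes> a [^] (j' * (p - 1)) \<in> H" by simp
      then show False using nx by blast
    qed
  qed
  then show ?thesis using that Hsub aH by blast
qed

end


context elab begin
lemma inv_pow_eq: assumes x: "x \<in> carrier C" shows "inv x = x [^] (p - 1)"
proof (rule inv_equality)
  have "x [^] (p - 1) \<otimes> x = x [^] p"
    using x p_gt1 using nat_pow_Suc[of x "p - 1"] by (simp add: Suc_diff_1)
  then show "x [^] (p - 1) \<otimes> x = \<one>" using x expo by simp
qed (use x in auto)

lemma pm1_sq: "((p - 1) * (p - 1)) mod p = 1"
proof -
  obtain q where q: "p = q + 2" using p_gt1 by (intro that[of "p - 2"]) simp
  have "(p - 1) * (p - 1) = 1 + p * q" unfolding q by (simp add: algebra_simps)
  then have "((p - 1) * (p - 1)) mod p = (1 + p * q) mod p" by simp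
  also have "\<dots> = 1" using p_gt1 by (simp only: mod_mult_self2) simp
  finally show ?thesis .
qed

lemma functional:
  assumes a: "a \<in> carrier C" "a \<noteq> \<one>"
  obtains G where "\<forall>x\<in>carrier C. \<forall>y\<in>carrier C. G (x \<otimes> y) mod p = (G x + G y) mod p"
    "G a mod p = 1"
proof -
  obtain H where Hsub: "subgroup H C" and aH: "a \<notin> H" and cov: "\<forall>x\<in>carrier C. \<exists>i. x \<otimes> a [^] (i::nat) \<in> H"
    using complement[OF a] by blast
  have HC: "H \<subseteq> carrier C" by (rule subgroup.subset[OF Hsub])
  have apow: "r mod p = 0" if "a [^] r \<in> H" for r :: nat
  proof (rule ccontr)
    assume "r mod p \<noteq> 0"
    then obtain r' where rr: "(r * r') mod p = 1" using inverse_mod by blast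
    have "a = a [^] (r * r')" using pow_mod[OF a(1), of "r * r'"] rr a by simp
    also have "\<dots> = (a [^] r) [^] r'" using a by (simp add: nat_pow_pow)
    also have "\<dots> \<in> H" by (rule sub_pow_closed[OF Hsub that])
    finally show False using aH by simp
  qed
  have uniq: "i mod p = i' mod p" if x: "x \<in> carrier C" and i: "x \<otimes> a [^] (i::nat) \<in> H"
    and i': "x \<otimes> a [^] (i'::nat) \<in> H" for x i i'
  proof -
    have "(x \<otimes> a [^] i') \<otimes> inv (x \<otimes> a [^] i) \<in> H"
      by (intro subgroup.m_closed[OF Hsub] subgroup.m_inv_closed[OF Hsub] i i')
    also have "(x \<otimes> a [^] i') \<otimes> inv (x \<otimes> a [^] i) = (x \<otimes> a [^] i') \<otimes> (inv x \<otimes> inv (a [^] i))"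
      using x a by (simp add: inv_mult)
    also have "\<dots> = (x \<otimes> inv x) \<otimes> (a [^] i' \<otimes> inv (a [^] i))"
      using x a by (simp add: m_ac)
    also have "\<dots> = a [^] i' \<otimes> (a [^] i) [^] (p - 1)"
      using x a inv_pow_eq[of "a [^] i"] by simp
    also have "\<dots> = a [^] (i' + (p - 1) * i)" using a by (simp add: nat_pow_pow nat_pow_mult mult.commute)
    finally have "(i' + (p - 1) * i) mod p = 0" by (rule apow)
    then have e1: "(i' + (p - 1) * i + i) mod p = i mod p"
      using mod_add_left_eq[of "i' + (p - 1) * i" p i] by simp
    have e2: "i' + (p - 1) * i + i = i' + p * i" using p_gt1 by (cases p) auto
    have e3: "(i' + p * i) mod p = i' mod p" by simp
    show ?thesis using e1 unfolding e2 e3 by simp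
  qed
  define g where "g x = (SOME i. x \<otimes> a [^] (i::nat) \<in> H)" for x
  have gH: "x \<otimes> a [^] g x \<in> H" if "x \<in> carrier C" for x
  proof -
    have "\<exists>i. x \<otimes> a [^] (i::nat) \<in> H" by (rule bspec[OF cov that])
    then show ?thesis unfolding g_def by (rule someI_ex)
  qed
  define G where "G x = (p - 1) * g x" for x
  have add: "G (x \<otimes> y) mod p = (G x + G y) mod p" if x: "x \<in> carrier C" and y: "y \<in> carrier C" for x y
  proof -
    have "(x \<otimes> y) \<otimes> (a [^] g x \<otimes> a [^] g y) = (x \<otimes> a [^] g x) \<otimes> (y \<otimes> a [^] g y)"
      using x y a by (simp add: m_ac)
    moreover have "a [^] g x \<otimes> a [^] g y = a [^] (g x + g y)" using a by (simp add: nat_pow_mult)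
    ultimately have "(x \<otimes> y) \<otimes> a [^] (g x + g y) = (x \<otimes> a [^] g x) \<otimes> (y \<otimes> a [^] g y)" by simp
    also have "\<dots> \<in> H" by (intro subgroup.m_closed[OF Hsub] gH x y)
    finally have hh: "(x \<otimes> y) \<otimes> a [^] (g x + g y) \<in> H" .
    have xy: "x \<otimes> y \<in> carrier C" using x y by simp
    have gg: "g (x \<otimes> y) mod p = (g x + g y) mod p"
      by (rule uniq[OF xy gH[OF xy] hh])
    have "((p - 1) * g (x \<otimes> y)) mod p = ((p - 1) * (g (x \<otimes> y) mod p)) mod p"
      by (rule mod_mult_right_eq[symmetric])
    also have "\<dots> = ((p - 1) * ((g x + g y) mod p)) mod p" by (simp only: gg)
    also have "\<dots> = ((p - 1) * (g x + g y)) mod p" by (rule mod_mult_right_eq)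
    finally show ?thesis unfolding G_def by (simp only: add_mult_distrib2)
  qed
  have "a \<otimes> inv a = \<one>" by (rule r_inv[OF a(1)])
  then have "a \<otimes> a [^] (p - 1) = \<one>" unfolding inv_pow_eq[OF a(1)] .
  then have "a \<otimes> a [^] (p - 1) \<in> H" using subgroup.one_closed[OF Hsub] by simp
  then have ga: "g a mod p = (p - 1) mod p" by (rule uniq[OF a(1) gH[OF a(1)]])
  have "G a mod p = ((p - 1) * (g a mod p)) mod p" unfolding G_def by (rule mod_mult_right_eq[symmetric])
  also have "\<dots> = ((p - 1) * ((p - 1) mod p)) mod p" by (simp only: ga)
  also have "\<dots> = ((p - 1) * (p - 1)) mod p" by (rule mod_mult_right_eq)
  finally have "G a mod p = 1" using pm1_sq by simp
  then show ?thesis using that add by blast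
qed

lemma pow_hom:
  assumes add: "\<forall>x\<in>carrier C. \<forall>y\<in>carrier C. G (x \<otimes> y) mod p = (G x + G y) mod p"
    and c: "c \<in> carrier C"
  shows "(\<lambda>x. c [^] (G x :: nat)) \<in> hom C C"
proof (rule homI)
  fix x y assume "x \<in> carrier C" "y \<in> carrier C"
  then have "c [^] G (x \<otimes> y) = c [^] (G x + G y)" using add c by (intro pow_cong) auto
  then show "c [^] G (x \<otimes> y) = c [^] G x \<otimes> c [^] G y" using c by (simp add: nat_pow_mult)
qed (use c in auto)

lemma E1: assumes a: "a \<in> carrier C" "a \<noteq> \<one>" and c: "c \<in> carrier C"
  shows "\<exists>\<phi>\<in>hom C C. \<phi> a = c"
proof -
  obtain G where add: "\<forall>x\<in>carrier C. \<forall>y\<in>carrier C. G (x \<otimes> y) mod p = (G x + G y) mod p"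
    and Ga: "G a mod p = 1" using functional[OF a] by blast
  have "c [^] G a = c" using pow_mod[OF c, of "G a"] Ga c by simp
  then show ?thesis using pow_hom[OF add c] by (intro bexI[of _ "\<lambda>x. c [^] G x"]) auto
qed

lemma E2: assumes psi: "\<psi> \<in> hom C C"
  and comm: "\<forall>\<phi>\<in>hom C C. \<forall>x\<in>carrier C. \<psi> (\<phi> x) = \<phi> (\<psi> x)"
  shows "\<exists>m::nat. \<forall>c\<in>carrier C. \<psi> c = c [^] m"
proof (cases "carrier C = {\<one>}")
  case True
  have "\<psi> \<one> = \<one>" using psi by (simp add: hom_one is_group)
  then show ?thesis using True by (intro exI[of _ 0]) auto
next
  case False
  then obtain a where a: "a \<in> carrier C" "a \<noteq> \<one>" by blast
  obtain G where add: "\<forall>x\<in>carrier C. \<forall>y\<in>carrier C. G (x \<otimes> y) mod p = (G x + G y) mod p"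
    and Ga: "G a mod p = 1" using functional[OF a] by blast
  have hc: "(\<lambda>x. c [^] G x) \<in> hom C C" if "c \<in> carrier C" for c using pow_hom[OF add that] .
  have Gc: "c [^] G a = c" if "c \<in> carrier C" for c using pow_mod[OF that, of "G a"] Ga that by simp
  have psia: "\<psi> a \<in> carrier C" using psi a by (auto simp: hom_def)
  define m where "m = G (\<psi> a)"
  have "\<psi> a = \<psi> ((\<lambda>x. a [^] G x) a)" using Gc[OF a(1)] by simp
  also have "\<dots> = a [^] m" using comm hc[OF a(1)] a unfolding m_def by auto
  finally have pa: "\<psi> a = a [^] m" .
  have "\<psi> c = c [^] m" if c: "c \<in> carrier C" for c
  proof -
    have "\<psi> c = \<psi> ((\<lambda>x. c [^] G x) a)" using Gc[OF c] by simp
    also have "\<dots> = (\<lambda>x. c [^] G x) (a [^] m)" using comm hc[OF c] a pa by auto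
    also have "\<dots> = ((\<lambda>x. c [^] G x) a) [^] m"
      using hom_nat_pow[OF hc[OF c] a(1)] is_group by simp
    also have "\<dots> = c [^] m" using Gc[OF c] by simp
    finally show ?thesis .
  qed
  then show ?thesis by blast
qed

end



locale elabt = elab C p for C (structure) and p + fixes t :: nat
begin

abbreviation "PP \<equiv> Pow_group C t"
abbreviation "QQ J \<equiv> coord_subprod C t ({..<t} - J)"

lemma carrier_PP: "carrier PP = (\<Pi>\<^sub>E i\<in>{..<t}. carrier C)"
  unfolding Pow_group_def by simp

lemma mult_PP: "x \<otimes>\<^bsub>PP\<^esub> y = (\<lambda>i\<in>{..<t}. x i \<otimes> y i)"
  unfolding Pow_group_def by simp

lemma one_PP: "\<one>\<^bsub>PP\<^esub> = (\<lambda>i\<in>{..<t}. \<one>)"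
  unfolding Pow_group_def by simp

lemma group_PP: "group PP"
  unfolding Pow_group_def by (simp add: is_group)

lemma inv_PP: "x \<in> carrier PP \<Longrightarrow> inv\<^bsub>PP\<^esub> x = (\<lambda>i\<in>{..<t}. inv (x i))"
  unfolding Pow_group_def by (simp add: is_group)

lemma comm_group_PP: "comm_group PP"
proof (rule group.group_comm_groupI[OF group_PP])
  fix x y assume "x \<in> carrier PP" "y \<in> carrier PP"
  then show "x \<otimes>\<^bsub>PP\<^esub> y = y \<otimes>\<^bsub>PP\<^esub> x"
    unfolding mult_PP carrier_PP by (intro restrict_ext) (auto simp: m_comm PiE_iff)
qed

lemma QQ_iff: "J \<subseteq> {..<t} \<Longrightarrow> f \<in> QQ J \<longleftrightarrow> f \<in> carrier PP \<and> (\<forall>j\<in>J. f j = \<one>)"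
  unfolding coord_subprod_def by (auto simp: Diff_Diff_Int Int_absorb1)

lemma QQ_sub: assumes J: "J \<subseteq> {..<t}" shows "subgroup (QQ J) PP"
proof (rule group.subgroupI[OF group_PP])
  show "QQ J \<subseteq> carrier PP" using QQ_iff[OF J] by blast
  have "\<one>\<^bsub>PP\<^esub> \<in> QQ J" using QQ_iff[OF J] monoid.one_closed[OF group.is_monoid[OF group_PP]] J
    by (auto simp: one_PP)
  then show "QQ J \<noteq> {}" by blast
next
  fix a assume "a \<in> QQ J"
  then show "inv\<^bsub>PP\<^esub> a \<in> QQ J" using QQ_iff[OF J] group.inv_closed[OF group_PP] J
    by (auto simp: inv_PP)
next
  fix a b assume "a \<in> QQ J" "b \<in> QQ J"
  then show "a \<otimes>\<^bsub>PP\<^esub> b \<in> QQ J" using QQ_iff[OF J] monoid.m_closed[OF group.is_monoid[OF group_PP]] J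
    by (auto simp: mult_PP)
qed

lemma diag_closed: "\<phi> \<in> hom C C \<Longrightarrow> x \<in> carrier PP \<Longrightarrow> diag_map t \<phi> x \<in> carrier PP"
  unfolding diag_map_def carrier_PP by (auto simp: hom_def PiE_iff)

lemma diag_mult: "\<phi> \<in> hom C C \<Longrightarrow> x \<in> carrier PP \<Longrightarrow> y \<in> carrier PP \<Longrightarrow>
   diag_map t \<phi> (x \<otimes>\<^bsub>PP\<^esub> y) = diag_map t \<phi> x \<otimes>\<^bsub>PP\<^esub> diag_map t \<phi> y"
  unfolding diag_map_def carrier_PP mult_PP by (intro restrict_ext) (auto simp: hom_def PiE_iff)

lemma diag_one: "\<phi> \<in> hom C C \<Longrightarrow> \<phi> \<one> = \<one>"
  using hom_one[of \<phi> C C] is_group by simp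

lemma hom_inv_C: "\<phi> \<in> hom C C \<Longrightarrow> x \<in> carrier C \<Longrightarrow> \<phi> (inv x) = inv (\<phi> x)"
  using group_hom.hom_inv[of C C \<phi> x] is_group by (simp add: group_hom_def group_hom_axioms_def)

lemma diag_inv: assumes phi: "\<phi> \<in> hom C C" and x: "x \<in> carrier PP"
  shows "diag_map t \<phi> (inv\<^bsub>PP\<^esub> x) = inv\<^bsub>PP\<^esub> (diag_map t \<phi> x)"
proof -
  have d: "diag_map t \<phi> x \<in> carrier PP" by (rule diag_closed[OF phi x])
  show ?thesis
    apply (subst inv_PP[OF d])
    apply (subst inv_PP[OF x])
    unfolding diag_map_def using x phi
    by (intro restrict_ext) (auto simp: carrier_PP PiE_iff hom_inv_C)
qed

lemma set_mult_iff: "g \<in> A <#>\<^bsub>PP\<^esub> B \<longleftrightarrow> (\<exists>a\<in>A. \<exists>b\<in>B. g = a \<otimes>\<^bsub>PP\<^esub> b)"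
  unfolding set_mult_def by auto

lemma extend:
  assumes R: "subgroup R PP" and inv: "\<forall>\<phi>\<in>hom C C. diag_map t \<phi> ` R \<subseteq> R"
    and J: "J \<subseteq> {..<t}" and surj: "R <#>\<^bsub>PP\<^esub> QQ J = carrier PP"
  shows "\<exists>J'. J \<subseteq> J' \<and> J' \<subseteq> {..<t} \<and> R \<inter> QQ J' = {\<one>\<^bsub>PP\<^esub>} \<and> R <#>\<^bsub>PP\<^esub> QQ J' = carrier PP"
proof -
  interpret G: comm_group PP by (rule comm_group_PP)
  have RC: "R \<subseteq> carrier PP" by (rule subgroup.subset[OF R])
  define F where "F = {J'. J \<subseteq> J' \<and> J' \<subseteq> {..<t} \<and> R <#>\<^bsub>PP\<^esub> QQ J' = carrier PP}"
  have finF: "finite F" by (rule finite_subset[of _ "Pow {..<t}"]) (auto simp: F_def)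
  have JF: "J \<in> F" using J surj by (auto simp: F_def)
  define m where "m = Max (card ` F)"
  have "m \<in> card ` F" unfolding m_def using finF JF by (intro Max_in) auto
  then obtain J' where J'F: "J' \<in> F" and cJ': "card J' = m" by auto
  have maxJ: "card J'' \<le> card J'" if "J'' \<in> F" for J''
    using cJ' finF that unfolding m_def by (simp add: Max_ge)
  have J'1: "J \<subseteq> J'" "J' \<subseteq> {..<t}" and J'2: "R <#>\<^bsub>PP\<^esub> QQ J' = carrier PP"
    using J'F by (auto simp: F_def)
  have "R \<inter> QQ J' \<subseteq> {\<one>\<^bsub>PP\<^esub>}"
  proof
    fix r assume rRQ: "r \<in> R \<inter> QQ J'"
    show "r \<in> {\<one>\<^bsub>PP\<^esub>}"
    proof (rule ccontr)
      assume "r \<notin> {\<one>\<^bsub>PP\<^esub>}"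
      have rP: "r \<in> carrier PP" using rRQ RC by auto
      have "\<exists>j<t. r j \<noteq> \<one>"
      proof (rule ccontr)
        assume "\<not> (\<exists>j<t. r j \<noteq> \<one>)"
        then have "r = \<one>\<^bsub>PP\<^esub>" using rP unfolding one_PP carrier_PP
          by (intro extensionalityI[of _ "{..<t}"]) (auto simp: PiE_iff)
        then show False using \<open>r \<notin> {\<one>\<^bsub>PP\<^esub>}\<close> by simp
      qed
      then obtain j where j: "j < t" "r j \<noteq> \<one>" by blast
      have jJ': "j \<notin> J'" using j rRQ QQ_iff[OF J'1(2)] by auto
      have rj: "r j \<in> carrier C" using rP j by (auto simp: carrier_PP PiE_iff)
      have "insert j J' \<in> F"
      proof -
        have ins: "insert j J' \<subseteq> {..<t}" using j J'1 by auto
        have "carrier PP \<subseteq> R <#>\<^bsub>PP\<^esub> QQ (insert j J')"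
        proof
          fix g assume g: "g \<in> carrier PP"
          then obtain r0 q0 where r0: "r0 \<in> R" and q0: "q0 \<in> QQ J'" and gq: "g = r0 \<otimes>\<^bsub>PP\<^esub> q0"
            using J'2 set_mult_iff by blast
          have q0P: "q0 \<in> carrier PP" using q0 QQ_iff[OF J'1(2)] by auto
          have q0j: "q0 j \<in> carrier C" using q0P j by (auto simp: carrier_PP PiE_iff)
          obtain \<phi> where phi: "\<phi> \<in> hom C C" "\<phi> (r j) = q0 j" using E1[OF rj j(2) q0j] by blast
          define r' where "r' = diag_map t \<phi> r"
          have r'R: "r' \<in> R" unfolding r'_def
            using subsetD[OF bspec[OF inv phi(1)] imageI[of r R "diag_map t \<phi>"]] rRQ by simp
          have r'P: "r' \<in> carrier PP" using r'R RC by auto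
          have r'j: "r' i = \<phi> (r i)" if "i < t" for i using that unfolding r'_def diag_map_def by simp
          have "inv\<^bsub>PP\<^esub> r' \<otimes>\<^bsub>PP\<^esub> q0 \<in> QQ (insert j J')"
            unfolding QQ_iff[OF ins]
          proof
            show "inv\<^bsub>PP\<^esub> r' \<otimes>\<^bsub>PP\<^esub> q0 \<in> carrier PP" using r'P q0P by simp
            show "\<forall>i\<in>insert j J'. (inv\<^bsub>PP\<^esub> r' \<otimes>\<^bsub>PP\<^esub> q0) i = \<one>"
            proof
              fix i assume i: "i \<in> insert j J'"
              then have it: "i < t" using ins by auto
              have "(inv\<^bsub>PP\<^esub> r' \<otimes>\<^bsub>PP\<^esub> q0) i = inv (\<phi> (r i)) \<otimes> q0 i"
                using it r'P by (simp add: mult_PP inv_PP r'j)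
              also have "\<dots> = \<one>"
              proof (cases "i = j")
                case True
                then show ?thesis using phi q0j by simp
              next
                case False
                then have "i \<in> J'" using i by simp
                then have "r i = \<one>" "q0 i = \<one>" using rRQ q0 QQ_iff[OF J'1(2)] by auto
                then show ?thesis using diag_one[OF phi(1)] by simp
              qed
              finally show "(inv\<^bsub>PP\<^esub> r' \<otimes>\<^bsub>PP\<^esub> q0) i = \<one>" .
            qed
          qed
          moreover have "r0 \<otimes>\<^bsub>PP\<^esub> r' \<in> R" by (rule subgroup.m_closed[OF R r0 r'R])
          moreover have "g = (r0 \<otimes>\<^bsub>PP\<^esub> r') \<otimes>\<^bsub>PP\<^esub> (inv\<^bsub>PP\<^esub> r' \<otimes>\<^bsub>PP\<^esub> q0)"
          proof -
            have r0P: "r0 \<in> carrier PP" using r0 RC by auto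
            have "r' \<otimes>\<^bsub>PP\<^esub> (inv\<^bsub>PP\<^esub> r' \<otimes>\<^bsub>PP\<^esub> q0) = q0"
              using r'P q0P by (simp add: G.m_assoc[symmetric])
            then show ?thesis using gq r0P r'P q0P by (simp add: G.m_assoc)
          qed
          ultimately show "g \<in> R <#>\<^bsub>PP\<^esub> QQ (insert j J')" using set_mult_iff by blast
        qed
        moreover have "R <#>\<^bsub>PP\<^esub> QQ (insert j J') \<subseteq> carrier PP"
          using RC QQ_iff[OF ins] by (auto simp: set_mult_iff intro!: monoid.m_closed[OF group.is_monoid[OF group_PP]])
        ultimately show ?thesis unfolding F_def using ins J'1 by auto
      qed
      then have "card (insert j J') \<le> card J'" by (rule maxJ)
      moreover have "finite J'" using J'1 finite_subset by blast
      ultimately show False using jJ' by simp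
    qed
  qed
  moreover have "\<one>\<^bsub>PP\<^esub> \<in> R \<inter> QQ J'"
    using subgroup.one_closed[OF R] subgroup.one_closed[OF QQ_sub[OF J'1(2)]] by blast
  ultimately show ?thesis using J'1 J'2 by blast
qed

end



lemma (in comm_group) aux1: "a \<in> carrier G \<Longrightarrow> b \<in> carrier G \<Longrightarrow> x \<in> carrier G \<Longrightarrow> y \<in> carrier G \<Longrightarrow>
  inv (a \<otimes> b) \<otimes> (x \<otimes> y) = (inv a \<otimes> x) \<otimes> (inv b \<otimes> y)"
  by (simp add: inv_mult m_ac)

lemma (in comm_group) aux2: "a \<in> carrier G \<Longrightarrow> b \<in> carrier G \<Longrightarrow> x \<in> carrier G \<Longrightarrow>
  (inv a \<otimes> x) \<otimes> inv (inv b \<otimes> x) = inv a \<otimes> b"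
proof -
  assume a: "a \<in> carrier G" and b: "b \<in> carrier G" and x: "x \<in> carrier G"
  have "inv (inv b \<otimes> x) = inv x \<otimes> b" using b x by (simp add: inv_mult_group)
  then have "(inv a \<otimes> x) \<otimes> inv (inv b \<otimes> x) = inv a \<otimes> (x \<otimes> (inv x \<otimes> b))"
    using a b x by (simp add: m_assoc)
  also have "x \<otimes> (inv x \<otimes> b) = b" using x b by (simp add: m_assoc[symmetric])
  finally show ?thesis .
qed

lemma (in group) aux3: "a \<in> carrier G \<Longrightarrow> x \<in> carrier G \<Longrightarrow> inv a \<otimes> x = \<one> \<Longrightarrow> x = a"
proof -
  assume a: "a \<in> carrier G" and x: "x \<in> carrier G" and e: "inv a \<otimes> x = \<one>"
  have "x = a \<otimes> (inv a \<otimes> x)" using a x by (simp add: m_assoc[symmetric])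
  also have "\<dots> = a" using e a by simp
  finally show ?thesis .
qed

lemma (in group) aux4: "a \<in> carrier G \<Longrightarrow> inv a \<otimes> a = \<one>"
  by simp

lemma (in group) aux5: "a \<in> carrier G \<Longrightarrow> b \<in> carrier G \<Longrightarrow> inv a \<otimes> b = \<one> \<Longrightarrow> a = b"
proof -
  assume "a \<in> carrier G" "b \<in> carrier G" "inv a \<otimes> b = \<one>"
  then have "b = a" by (rule aux3)
  then show "a = b" by simp
qed

context elabt begin

lemma coord_embed_closed: "c \<in> carrier C \<Longrightarrow> coord_embed C t i c \<in> carrier PP"
  unfolding coord_embed_def carrier_PP by auto

lemma coord_embed_mult: "c \<in> carrier C \<Longrightarrow> d \<in> carrier C \<Longrightarrow>
  coord_embed C t i (c \<otimes> d) = coord_embed C t i c \<otimes>\<^bsub>PP\<^esub> coord_embed C t i d"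
  unfolding coord_embed_def mult_PP by (intro restrict_ext) auto

lemma diag_embed: "\<phi> \<in> hom C C \<Longrightarrow> c \<in> carrier C \<Longrightarrow>
  diag_map t \<phi> (coord_embed C t i c) = coord_embed C t i (\<phi> c)"
  unfolding coord_embed_def diag_map_def by (intro restrict_ext) (auto simp: diag_one)

lemma diag_QQ: assumes "\<phi> \<in> hom C C" "J' \<subseteq> {..<t}" "q \<in> QQ J'" shows "diag_map t \<phi> q \<in> QQ J'"
  using assms diag_closed[of \<phi> q] QQ_iff[OF assms(2)] diag_one[OF assms(1)]
  unfolding diag_map_def by auto

lemma bprime:
  assumes R: "subgroup R PP" and inv: "\<forall>\<phi>\<in>hom C C. diag_map t \<phi> ` R \<subseteq> R"
    and J'sub: "J' \<subseteq> {..<t}" and inter: "R \<inter> QQ J' = {\<one>\<^bsub>PP\<^esub>}"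
    and surj: "R <#>\<^bsub>PP\<^esub> QQ J' = carrier PP"
  shows "\<exists>(n :: nat \<Rightarrow> nat \<Rightarrow> int) \<pi>.
                  \<pi> \<in> hom PP PP
                  \<and> \<pi> ` carrier PP = QQ J'
                  \<and> (\<forall>x\<in>carrier PP. \<pi> x = \<one>\<^bsub>PP\<^esub> \<longleftrightarrow> x \<in> R)
                  \<and> (\<forall>q\<in>QQ J'. \<pi> q = q)
                  \<and> (\<forall>i<t. \<forall>c\<in>carrier C.
                       \<pi> (coord_embed C t i c)
                       = (\<lambda>j\<in>{..<t}. if j \<notin> J' then c [^] (n i j) else \<one>))"
proof -
  interpret G: comm_group PP by (rule comm_group_PP)
  have RC: "R \<subseteq> carrier PP" by (rule subgroup.subset[OF R])
  have Qs: "subgroup (QQ J') PP" by (rule QQ_sub[OF J'sub])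
  have QC: "QQ J' \<subseteq> carrier PP" by (rule subgroup.subset[OF Qs])
  have ex: "\<exists>r. r \<in> R \<and> inv\<^bsub>PP\<^esub> r \<otimes>\<^bsub>PP\<^esub> x \<in> QQ J'" if x: "x \<in> carrier PP" for x
  proof -
    have "x \<in> R <#>\<^bsub>PP\<^esub> QQ J'" using surj x by simp
    then obtain r q where r: "r \<in> R" and q: "q \<in> QQ J'" and xrq: "x = r \<otimes>\<^bsub>PP\<^esub> q"
      unfolding set_mult_iff by blast
    have rc: "r \<in> carrier PP" and qc: "q \<in> carrier PP" using r q RC QC by auto
    have "inv\<^bsub>PP\<^esub> r \<otimes>\<^bsub>PP\<^esub> x = q" using rc qc xrq by (simp add: G.m_assoc[symmetric])
    then show ?thesis using r q by auto
  qed
  have uniq: "r1 = r2" if x: "x \<in> carrier PP" and r1: "r1 \<in> R" "inv\<^bsub>PP\<^esub> r1 \<otimes>\<^bsub>PP\<^esub> x \<in> QQ J'"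
    and r2: "r2 \<in> R" "inv\<^bsub>PP\<^esub> r2 \<otimes>\<^bsub>PP\<^esub> x \<in> QQ J'" for x r1 r2
  proof -
    have r1c: "r1 \<in> carrier PP" and r2c: "r2 \<in> carrier PP" using r1 r2 RC by auto
    have "(inv\<^bsub>PP\<^esub> r1 \<otimes>\<^bsub>PP\<^esub> x) \<otimes>\<^bsub>PP\<^esub> inv\<^bsub>PP\<^esub> (inv\<^bsub>PP\<^esub> r2 \<otimes>\<^bsub>PP\<^esub> x) \<in> QQ J'"
      by (rule subgroup.m_closed[OF Qs r1(2) subgroup.m_inv_closed[OF Qs r2(2)]])
    then have "inv\<^bsub>PP\<^esub> r1 \<otimes>\<^bsub>PP\<^esub> r2 \<in> QQ J'" using G.aux2[OF r1c r2c x] by simp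
    moreover have "inv\<^bsub>PP\<^esub> r1 \<otimes>\<^bsub>PP\<^esub> r2 \<in> R"
      by (rule subgroup.m_closed[OF R subgroup.m_inv_closed[OF R r1(1)] r2(1)])
    ultimately have "inv\<^bsub>PP\<^esub> r1 \<otimes>\<^bsub>PP\<^esub> r2 = \<one>\<^bsub>PP\<^esub>" using inter by auto
    then show ?thesis using G.aux5[OF r1c r2c] by simp
  qed
  define \<rho> where "\<rho> x = (THE r. r \<in> R \<and> inv\<^bsub>PP\<^esub> r \<otimes>\<^bsub>PP\<^esub> x \<in> QQ J')" for x
  have rho: "\<rho> x \<in> R \<and> inv\<^bsub>PP\<^esub> (\<rho> x) \<otimes>\<^bsub>PP\<^esub> x \<in> QQ J'" if x: "x \<in> carrier PP" for x
  proof -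
    have "\<exists>!r. r \<in> R \<and> inv\<^bsub>PP\<^esub> r \<otimes>\<^bsub>PP\<^esub> x \<in> QQ J'"
      using ex[OF x] uniq[OF x] by blast
    then show ?thesis unfolding \<rho>_def by (rule theI')
  qed
  have rho_eq: "\<rho> x = r" if x: "x \<in> carrier PP" and r: "r \<in> R" "inv\<^bsub>PP\<^esub> r \<otimes>\<^bsub>PP\<^esub> x \<in> QQ J'" for x r
    using uniq[OF x] rho[OF x] r by blast
  have rhoC: "\<rho> x \<in> carrier PP" if "x \<in> carrier PP" for x using rho[OF that] RC by auto
  have rho_mult: "\<rho> (x \<otimes>\<^bsub>PP\<^esub> y) = \<rho> x \<otimes>\<^bsub>PP\<^esub> \<rho> y" if x: "x \<in> carrier PP" and y: "y \<in> carrier PP" for x y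
  proof (rule rho_eq)
    show "x \<otimes>\<^bsub>PP\<^esub> y \<in> carrier PP" using x y by simp
    show "\<rho> x \<otimes>\<^bsub>PP\<^esub> \<rho> y \<in> R" by (rule subgroup.m_closed[OF R]) (use rho[OF x] rho[OF y] in auto)
    have "inv\<^bsub>PP\<^esub> (\<rho> x \<otimes>\<^bsub>PP\<^esub> \<rho> y) \<otimes>\<^bsub>PP\<^esub> (x \<otimes>\<^bsub>PP\<^esub> y)
        = (inv\<^bsub>PP\<^esub> (\<rho> x) \<otimes>\<^bsub>PP\<^esub> x) \<otimes>\<^bsub>PP\<^esub> (inv\<^bsub>PP\<^esub> (\<rho> y) \<otimes>\<^bsub>PP\<^esub> y)"
      by (rule G.aux1[OF rhoC[OF x] rhoC[OF y] x y])
    also have "\<dots> \<in> QQ J'" by (rule subgroup.m_closed[OF Qs]) (use rho[OF x] rho[OF y] in auto)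
    finally show "inv\<^bsub>PP\<^esub> (\<rho> x \<otimes>\<^bsub>PP\<^esub> \<rho> y) \<otimes>\<^bsub>PP\<^esub> (x \<otimes>\<^bsub>PP\<^esub> y) \<in> QQ J'" .
  qed
  define \<pi> where "\<pi> x = inv\<^bsub>PP\<^esub> (\<rho> x) \<otimes>\<^bsub>PP\<^esub> x" for x
  have piQ: "\<pi> x \<in> QQ J'" if "x \<in> carrier PP" for x unfolding \<pi>_def using rho[OF that] by auto
  have rho_one: "\<rho> q = \<one>\<^bsub>PP\<^esub>" if q: "q \<in> QQ J'" for q
  proof (rule rho_eq)
    show "q \<in> carrier PP" using q QC by auto
    show "\<one>\<^bsub>PP\<^esub> \<in> R" by (rule subgroup.one_closed[OF R])
    show "inv\<^bsub>PP\<^esub> \<one>\<^bsub>PP\<^esub> \<otimes>\<^bsub>PP\<^esub> q \<in> QQ J'" using q QC by auto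
  qed
  have piq: "\<pi> q = q" if q: "q \<in> QQ J'" for q unfolding \<pi>_def rho_one[OF q] using q QC by auto
  have hom: "\<pi> \<in> hom PP PP"
  proof (rule homI)
    fix x assume "x \<in> carrier PP" then show "\<pi> x \<in> carrier PP" using piQ QC by auto
  next
    fix x y assume x: "x \<in> carrier PP" and y: "y \<in> carrier PP"
    show "\<pi> (x \<otimes>\<^bsub>PP\<^esub> y) = \<pi> x \<otimes>\<^bsub>PP\<^esub> \<pi> y"
      unfolding \<pi>_def rho_mult[OF x y] by (rule G.aux1[OF rhoC[OF x] rhoC[OF y] x y])
  qed
  have img: "\<pi> ` carrier PP = QQ J'"
  proof
    show "\<pi> ` carrier PP \<subseteq> QQ J'" using piQ by auto
    show "QQ J' \<subseteq> \<pi> ` carrier PP"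
    proof
      fix q assume q: "q \<in> QQ J'"
      then have "q = \<pi> q" using piq by simp
      then show "q \<in> \<pi> ` carrier PP" using q QC by auto
    qed
  qed
  have ker: "\<pi> x = \<one>\<^bsub>PP\<^esub> \<longleftrightarrow> x \<in> R" if x: "x \<in> carrier PP" for x
  proof
    assume "\<pi> x = \<one>\<^bsub>PP\<^esub>"
    then have "x = \<rho> x" using G.aux3[OF rhoC[OF x] x] unfolding \<pi>_def by simp
    then show "x \<in> R" using rho[OF x] by simp
  next
    assume xR: "x \<in> R"
    have "\<rho> x = x" by (rule rho_eq[OF x xR]) (use x subgroup.one_closed[OF Qs] in simp)
    then show "\<pi> x = \<one>\<^bsub>PP\<^esub>" unfolding \<pi>_def using x by simp
  qed
  have scalar: "\<exists>m::nat. \<forall>c\<in>carrier C. \<rho> (coord_embed C t i c) j = c [^] m" if j: "j < t" for i j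
  proof (rule E2)
    show "(\<lambda>c. \<rho> (coord_embed C t i c) j) \<in> hom C C"
    proof (rule homI)
      fix c assume c: "c \<in> carrier C"
      show "\<rho> (coord_embed C t i c) j \<in> carrier C"
        using rhoC[OF coord_embed_closed[OF c]] j by (auto simp: carrier_PP PiE_iff)
    next
      fix c d assume c: "c \<in> carrier C" and d: "d \<in> carrier C"
      show "\<rho> (coord_embed C t i (c \<otimes> d)) j = \<rho> (coord_embed C t i c) j \<otimes> \<rho> (coord_embed C t i d) j"
        unfolding coord_embed_mult[OF c d] rho_mult[OF coord_embed_closed[OF c] coord_embed_closed[OF d]]
        using j by (simp add: mult_PP)
    qed
    show "\<forall>\<phi>\<in>hom C C. \<forall>x\<in>carrier C. \<rho> (coord_embed C t i (\<phi> x)) j = \<phi> (\<rho> (coord_embed C t i x) j)"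
    proof (intro ballI)
      fix \<phi> c assume phi: "\<phi> \<in> hom C C" and c: "c \<in> carrier C"
      define e where "e = coord_embed C t i c"
      have e: "e \<in> carrier PP" unfolding e_def by (rule coord_embed_closed[OF c])
      have phic: "\<phi> c \<in> carrier C" using phi c by (auto simp: hom_def)
      have "\<rho> (coord_embed C t i (\<phi> c)) = diag_map t \<phi> (\<rho> e)"
      proof (rule rho_eq)
        show "coord_embed C t i (\<phi> c) \<in> carrier PP" by (rule coord_embed_closed[OF phic])
        show "diag_map t \<phi> (\<rho> e) \<in> R"
          using subsetD[OF bspec[OF inv phi] imageI[of "\<rho> e" R "diag_map t \<phi>"]] rho[OF e] by simp
        have "diag_map t \<phi> (inv\<^bsub>PP\<^esub> (\<rho> e) \<otimes>\<^bsub>PP\<^esub> e)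
            = diag_map t \<phi> (inv\<^bsub>PP\<^esub> (\<rho> e)) \<otimes>\<^bsub>PP\<^esub> diag_map t \<phi> e"
          by (rule diag_mult[OF phi G.inv_closed[OF rhoC[OF e]] e])
        also have "\<dots> = inv\<^bsub>PP\<^esub> (diag_map t \<phi> (\<rho> e)) \<otimes>\<^bsub>PP\<^esub> coord_embed C t i (\<phi> c)"
          unfolding diag_inv[OF phi rhoC[OF e]] unfolding e_def diag_embed[OF phi c] ..
        finally have "inv\<^bsub>PP\<^esub> (diag_map t \<phi> (\<rho> e)) \<otimes>\<^bsub>PP\<^esub> coord_embed C t i (\<phi> c)
            = diag_map t \<phi> (inv\<^bsub>PP\<^esub> (\<rho> e) \<otimes>\<^bsub>PP\<^esub> e)" by simp
        also have "\<dots> \<in> QQ J'" using rho[OF e] by (intro diag_QQ[OF phi J'sub]) auto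
        finally show "inv\<^bsub>PP\<^esub> (diag_map t \<phi> (\<rho> e)) \<otimes>\<^bsub>PP\<^esub> coord_embed C t i (\<phi> c) \<in> QQ J'" .
      qed
      then show "\<rho> (coord_embed C t i (\<phi> c)) j = \<phi> (\<rho> (coord_embed C t i c) j)"
        using j unfolding e_def diag_map_def by simp
    qed
  qed
  define n where "n i j = (if i \<in> J' then - int (SOME m. \<forall>c\<in>carrier C. \<rho> (coord_embed C t i c) j = c [^] m)
                           else if i = j then 1 else 0)" for i j
  have coords: "\<pi> (coord_embed C t i c) = (\<lambda>j\<in>{..<t}. if j \<notin> J' then c [^] (n i j) else \<one>)"
    if i: "i < t" and c: "c \<in> carrier C" for i c
  proof -
    define e where "e = coord_embed C t i c"
    have e: "e \<in> carrier PP" unfolding e_def by (rule coord_embed_closed[OF c])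
    have pe: "\<pi> e \<in> carrier PP" using piQ[OF e] QC by auto
    have peJ: "\<pi> e j = \<one>" if "j \<in> J'" for j using piQ[OF e] QQ_iff[OF J'sub] that by auto
    show ?thesis unfolding e_def[symmetric]
    proof (rule extensionalityI[of _ "{..<t}"])
      show "\<pi> e \<in> extensional {..<t}" using pe by (simp add: carrier_PP PiE_iff)
      show "(\<lambda>j\<in>{..<t}. if j \<notin> J' then c [^] n i j else \<one>) \<in> extensional {..<t}" by simp
      fix j assume "j \<in> {..<t}"
      then have j: "j < t" by simp
      show "\<pi> e j = (\<lambda>j\<in>{..<t}. if j \<notin> J' then c [^] n i j else \<one>) j"
      proof (cases "j \<in> J'")
        case True then show ?thesis using peJ j by simp
      next
        case jJ: False
        show ?thesis
        proof (cases "i \<in> J'")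
          case False
          have "e \<in> QQ J'" unfolding QQ_iff[OF J'sub] using e False J'sub unfolding e_def coord_embed_def by auto
          then have "\<pi> e = e" by (rule piq)
          then show ?thesis using j jJ False c unfolding e_def coord_embed_def n_def by auto
        next
          case True
          obtain m where m: "\<forall>c\<in>carrier C. \<rho> (coord_embed C t i c) j = c [^] (m::nat)" using scalar[OF j] by blast
          define m' where "m' = (SOME m. \<forall>c\<in>carrier C. \<rho> (coord_embed C t i c) j = c [^] (m::nat))"
          have m': "\<forall>c\<in>carrier C. \<rho> (coord_embed C t i c) j = c [^] m'"
            unfolding m'_def by (rule someI[of _ m]) (rule m)
          have nij: "n i j = - int m'" unfolding n_def m'_def using True by simp
          have ij: "i \<noteq> j" using True jJ by auto
          have "\<pi> e j = inv (\<rho> e j) \<otimes> e j"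
            unfolding \<pi>_def using j rhoC[OF e] by (simp add: inv_PP mult_PP)
          also have "e j = \<one>" unfolding e_def coord_embed_def using ij j by simp
          also have "\<rho> e j = c [^] m'" using m' c unfolding e_def by simp
          finally have "\<pi> e j = inv (c [^] m')" using c by simp
          also have "\<dots> = c [^] (- int m')" using c by (simp add: int_pow_neg int_pow_int)
          finally show ?thesis using j jJ nij by simp
        qed
      qed
    qed
  qed
  show ?thesis
    by (rule exI[of _ n], rule exI[of _ \<pi>]) (use hom img ker piq coords in blast)
qed

end



lemma prime_dvd_choose_pow:
  fixes p :: nat
  assumes p: "Factorial_Ring.prime p" and r: "0 < r" "r < p ^ e"
  shows "p dvd (p ^ e choose r)"
proof (rule ccontr)
  assume nd: "\<not> p dvd (p ^ e choose r)"
  have "r * (p ^ e choose r) = p ^ e * ((p ^ e - 1) choose (r - 1))"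
    using r(1) by (rule times_binomial_minus1_eq)
  then have "p ^ e dvd r * (p ^ e choose r)" by simp
  moreover have "coprime (p ^ e) (p ^ e choose r)"
    using p nd by (simp add: prime_imp_coprime)
  ultimately have "p ^ e dvd r" by (simp add: coprime_dvd_mult_left_iff)
  then have "p ^ e \<le> r" using r by (simp add: dvd_imp_le)
  then show False using r by simp
qed

lemma partn_transfer:
  assumes P: "partn_lst {..<N} qs r" and A: "finite A" "card A = N"
  shows "partn_lst A qs r"
  unfolding partn_lst_def
proof (intro ballI)
  fix f assume f: "f \<in> (nsets (A) (r)) \<rightarrow> {..<length qs}"
  obtain h where h: "bij_betw h {..<N} A"
    using ex_bij_betw_nat_finite[OF A(1)] A(2) by (auto simp: atLeast0LessThan)
  have hfun: "h \<in> {..<N} \<rightarrow> A" and hinj: "inj_on h {..<N}"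
    using h by (auto simp: bij_betw_def)
  have "(\<lambda>Z. f (h ` Z)) \<in> (nsets ({..<N}) (r)) \<rightarrow> {..<length qs}"
    using nsets_compose_image_funcset[OF f hfun hinj] by (simp add: comp_def)
  then obtain i H where i: "i < length qs" and H: "H \<in> (nsets ({..<N}) ((qs ! i)))"
    and hom: "(\<lambda>Z. f (h ` Z)) ` (nsets (H) (r)) \<subseteq> {i}"
    using P unfolding partn_lst_def monochromatic_def by blast
  have HN: "H \<subseteq> {..<N}" using H by (auto simp: nsets_def)
  have hinjH: "inj_on h H" using inj_on_subset[OF hinj HN] .
  have "h ` H \<in> (nsets (A) ((qs ! i)))"
    using H hfun hinjH HN by (auto simp: nsets_def card_image)
  moreover have "f ` (nsets (h ` H) (r)) \<subseteq> {i}"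
  proof
    fix y assume "y \<in> f ` (nsets (h ` H) (r))"
    then obtain Z where Z: "Z \<in> (nsets (h ` H) (r))" and y: "y = f Z" by blast
    obtain Y where Y: "Y \<in> (nsets (H) (r))" and XY: "Z = h ` Y" by (rule nset_image_obtains[OF Z hinjH])
    show "y \<in> {i}" using hom Y unfolding y XY by auto
  qed
  ultimately show "\<exists>i<length qs. monochromatic A (qs ! i) r f i"
    using i unfolding monochromatic_def by blast
qed

lemma ramsey_levels:
  fixes q :: nat
  shows "\<exists>N. \<forall>f :: nat set \<Rightarrow> nat. (\<forall>U. f U < q) \<longrightarrow> (\<exists>H. H \<subseteq> {..<N} \<and> card H = m \<and>
     (\<forall>U V. U \<subseteq> H \<and> V \<subseteq> H \<and> card U = card V \<and> 1 \<le> card U \<and> card U \<le> K \<longrightarrow> f U = f V))"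
proof (induction K arbitrary: m)
  case 0
  show ?case by (rule exI[of _ m]) auto
next
  case (Suc K)
  obtain N1 :: nat where PN1: "partn_lst {..<N1} (replicate q m) (Suc K)" using ramsey_full[of "replicate q m" "Suc K"] by blast
  obtain N where IH: "\<forall>f :: nat set \<Rightarrow> nat. (\<forall>U. f U < q) \<longrightarrow> (\<exists>H. H \<subseteq> {..<N} \<and> card H = N1 \<and>
     (\<forall>U V. U \<subseteq> H \<and> V \<subseteq> H \<and> card U = card V \<and> 1 \<le> card U \<and> card U \<le> K \<longrightarrow> f U = f V))"
    using Suc.IH[of N1] by blast
  show ?case
  proof (rule exI[of _ N], intro allI impI)
    fix f :: "nat set \<Rightarrow> nat" assume fq: "\<forall>U. f U < q"
    obtain H0 where H0: "H0 \<subseteq> {..<N}" "card H0 = N1"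
      and hom0: "\<forall>U V. U \<subseteq> H0 \<and> V \<subseteq> H0 \<and> card U = card V \<and> 1 \<le> card U \<and> card U \<le> K \<longrightarrow> f U = f V"
      using IH fq by blast
    have finH0: "finite H0" using H0(1) finite_subset by blast
    have P0: "partn_lst H0 (replicate q m) (Suc K)" by (rule partn_transfer[OF PN1 finH0 H0(2)])
    have "f \<in> (nsets (H0) (Suc K)) \<rightarrow> {..<length (replicate q m)}" using fq by auto
    then obtain i H where i: "i < length (replicate q m)" and H: "H \<in> (nsets (H0) ((replicate q m ! i)))"
      and hom: "f ` (nsets (H) (Suc K)) \<subseteq> {i}"
      using P0 unfolding partn_lst_def monochromatic_def by blast
    have Hm: "H \<subseteq> H0" "card H = m" "finite H" using H i by (auto simp: nsets_def)
    show "\<exists>H. H \<subseteq> {..<N} \<and> card H = m \<and>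
       (\<forall>U V. U \<subseteq> H \<and> V \<subseteq> H \<and> card U = card V \<and> 1 \<le> card U \<and> card U \<le> Suc K \<longrightarrow> f U = f V)"
    proof (intro exI[of _ H] conjI allI impI)
      show "H \<subseteq> {..<N}" using Hm H0 by auto
      show "card H = m" by (rule Hm(2))
      fix U V assume UV: "U \<subseteq> H \<and> V \<subseteq> H \<and> card U = card V \<and> 1 \<le> card U \<and> card U \<le> Suc K"
      show "f U = f V"
      proof (cases "card U \<le> K")
        case True then show ?thesis using hom0 UV Hm(1) by blast
      next
        case False
        then have "card U = Suc K" using UV by simp
        then have "U \<in> (nsets (H) (Suc K))" "V \<in> (nsets (H) (Suc K))"
          using UV Hm(3) finite_subset by (auto simp: nsets_def)
        then show ?thesis using hom by blast
      qed
    qed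
  qed
qed




context elab begin

lemma finprod_hom:
  assumes phi: "\<phi> \<in> hom C C" and A: "finite A" and c: "\<forall>U\<in>A. c U \<in> carrier C"
  shows "\<phi> (finprod C c A) = finprod C (\<lambda>U. \<phi> (c U)) A"
  using A c
proof (induction A rule: finite_induct)
  case empty
  then show ?case using hom_one[OF phi is_group is_group] by simp
next
  case (insert a A)
  have ca: "c a \<in> carrier C" using insert by auto
  have cA: "c \<in> A \<rightarrow> carrier C" using insert by auto
  have pa: "\<phi> (c a) \<in> carrier C" using ca phi by (auto simp: hom_def)
  have pA: "(\<lambda>U. \<phi> (c U)) \<in> A \<rightarrow> carrier C" using cA phi by (auto simp: hom_def)
  have "\<phi> (finprod C c (insert a A)) = \<phi> (c a \<otimes> finprod C c A)"
    using insert ca cA by simp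
  also have "\<dots> = \<phi> (c a) \<otimes> \<phi> (finprod C c A)"
    using ca cA phi by (simp add: hom_mult)
  also have "\<dots> = \<phi> (c a) \<otimes> finprod C (\<lambda>U. \<phi> (c U)) A" using insert by simp
  also have "\<dots> = finprod C (\<lambda>U. \<phi> (c U)) (insert a A)"
    using insert pa pA by simp
  finally show ?case .
qed

lemma main_elab:
  assumes kpos: "k > 0"
  shows "\<exists>t\<ge>k. \<exists>R.
    subgroup R (Pow_group C t)
    \<and> (\<forall>\<phi>\<in>hom C C. diag_map t \<phi> ` R \<subseteq> R)
    \<and> (\<forall>x\<in>R. \<exists>j<t. x j = \<one>\<^bsub>C\<^esub>)
    \<and> (\<forall>J. J \<subseteq> {..<t} \<and> card J = k \<longrightarrow>
          R <#>\<^bsub>Pow_group C t\<^esub> coord_subprod C t ({..<t} - J) = carrier (Pow_group C t))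
    \<and> (\<forall>J. J \<subseteq> {..<t} \<and> card J = k \<longrightarrow>
          (\<exists>J'. J \<subseteq> J' \<and> J' \<subseteq> {..<t}
             \<and> R \<inter> coord_subprod C t ({..<t} - J') = {\<one>\<^bsub>Pow_group C t\<^esub>}
             \<and> R <#>\<^bsub>Pow_group C t\<^esub> coord_subprod C t ({..<t} - J') = carrier (Pow_group C t)
             \<and> (\<exists>(n :: nat \<Rightarrow> nat \<Rightarrow> int) \<pi>.
                  \<pi> \<in> hom (Pow_group C t) (Pow_group C t)
                  \<and> \<pi> ` carrier (Pow_group C t) = coord_subprod C t ({..<t} - J')
                  \<and> (\<forall>x\<in>carrier (Pow_group C t). \<pi> x = \<one>\<^bsub>Pow_group C t\<^esub> \<longleftrightarrow> x \<in> R)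
                  \<and> (\<forall>q\<in>coord_subprod C t ({..<t} - J'). \<pi> q = q)
                  \<and> (\<forall>i<t. \<forall>c\<in>carrier C.
                       \<pi> (coord_embed C t i c)
                       = (\<lambda>j\<in>{..<t}. if j \<notin> J' then c [^]\<^bsub>C\<^esub> (n i j) else \<one>\<^bsub>C\<^esub>)))))"
proof -
  define q where "q = card (carrier C)"
  define s where "s = p ^ k"
  have p2: "2 \<le> p" using p_gt1 by simp
  have s_gt: "k < s"
  proof -
    have "k < 2 ^ k" by simp
    also have "(2::nat) ^ k \<le> p ^ k" using p2 by (rule power_mono) simp
    finally show ?thesis unfolding s_def .
  qed
  obtain n where RN: "\<forall>f :: nat set \<Rightarrow> nat. (\<forall>U. f U < q) \<longrightarrow> (\<exists>H. H \<subseteq> {..<n} \<and> card H = s \<and>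
     (\<forall>U V. U \<subseteq> H \<and> V \<subseteq> H \<and> card U = card V \<and> 1 \<le> card U \<and> card U \<le> k \<longrightarrow> f U = f V))"
    using ramsey_levels[of q s k] by blast
  have q_pos: "q > 0" unfolding q_def using fin one_closed card_gt_0_iff by blast
  have n_ge: "s \<le> n"
  proof -
    have "(\<forall>U. (\<lambda>_::nat set. 0::nat) U < q) \<longrightarrow> (\<exists>H. H \<subseteq> {..<n} \<and> card H = s \<and>
     (\<forall>U V. U \<subseteq> H \<and> V \<subseteq> H \<and> card U = card V \<and> 1 \<le> card U \<and> card U \<le> k \<longrightarrow> (\<lambda>_::nat set. 0::nat) U = (\<lambda>_::nat set. 0::nat) V))"
      using RN by (rule spec)
    then obtain H where H: "H \<subseteq> {..<n}" "card H = s" using q_pos by auto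
    have "card H \<le> card {..<n}" by (rule card_mono[OF finite_lessThan H(1)])
    then show ?thesis using H(2) by simp
  qed
  define T where "T = {S. S \<subseteq> {..<n} \<and> S \<noteq> {}}"
  have finT: "finite T" unfolding T_def by (rule finite_subset[of _ "Pow {..<n}"]) auto
  define t where "t = card T"
  obtain \<sigma> where \<sigma>: "bij_betw \<sigma> {..<t} T"
    using ex_bij_betw_nat_finite[OF finT] unfolding t_def by (auto simp: atLeast0LessThan)
  have \<sigma>T: "\<sigma> j \<in> T" if "j < t" for j using \<sigma> that by (auto simp: bij_betw_def)
  have \<sigma>inj: "inj_on \<sigma> {..<t}" using \<sigma> by (auto simp: bij_betw_def)
  have \<sigma>surj: "\<sigma> ` {..<t} = T" using \<sigma> by (auto simp: bij_betw_def)
  have \<sigma>fin: "finite (\<sigma> j)" if "j < t" for j using \<sigma>T[OF that] unfolding T_def by (auto intro: finite_subset)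
  have t_ge: "k \<le> t"
  proof -
    have "(\<lambda>i. {i}) ` {..<n} \<subseteq> T" unfolding T_def by auto
    then have "card ((\<lambda>i. {i}) ` {..<n}) \<le> t" unfolding t_def using finT by (rule card_mono[rotated])
    moreover have "card ((\<lambda>i. {i}) ` {..<n}) = n" by (subst card_image) (auto simp: inj_on_def)
    ultimately show ?thesis using s_gt n_ge by simp
  qed
  interpret E: elabt C p t by unfold_locales
  interpret G: comm_group E.PP by (rule E.comm_group_PP)
  define Fs where "Fs S = {U. U \<subseteq> S \<and> U \<noteq> {} \<and> card U \<le> k}" for S :: "nat set"
  define xv where "xv c S = finprod C c (Fs S)" for c :: "nat set \<Rightarrow> 'a" and S
  define R where "R = {x. \<exists>c. (\<forall>U. c U \<in> carrier C) \<and> x = (\<lambda>j\<in>{..<t}. xv c (\<sigma> j))}"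
  have finFs: "finite (Fs S)" if "finite S" for S
    unfolding Fs_def by (rule finite_subset[of _ "Pow S"]) (use that in auto)
  have xv_closed: "xv c S \<in> carrier C" if "\<forall>U. c U \<in> carrier C" for c S
    unfolding xv_def using that by (intro finprod_closed) auto
  have Rmem: "(\<lambda>j\<in>{..<t}. xv c (\<sigma> j)) \<in> R" if "\<forall>U. c U \<in> carrier C" for c
    unfolding R_def using that by blast
  have RC: "R \<subseteq> carrier E.PP"
  proof
    fix x assume "x \<in> R"
    then obtain c where c: "\<forall>U. c U \<in> carrier C" and x: "x = (\<lambda>j\<in>{..<t}. xv c (\<sigma> j))"
      unfolding R_def by blast
    show "x \<in> carrier E.PP" unfolding x E.carrier_PP restrict_PiE_iff using xv_closed[OF c] by blast
  qed
  have xv_mult: "xv (\<lambda>U. c U \<otimes> d U) S = xv c S \<otimes> xv d S"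
    if "\<forall>U. c U \<in> carrier C" "\<forall>U. d U \<in> carrier C" for c d S
    unfolding xv_def using that by (intro finprod_multf) auto
  have xv_one: "xv (\<lambda>U. \<one>) S = \<one>" for S unfolding xv_def by simp
  have xv_inv: "xv (\<lambda>U. inv (c U)) S = inv (xv c S)" if c: "\<forall>U. c U \<in> carrier C" for c S
  proof -
    have ic: "\<forall>U. inv (c U) \<in> carrier C" using c by simp
    have "xv (\<lambda>U. inv (c U)) S \<otimes> xv c S = xv (\<lambda>U. inv (c U) \<otimes> c U) S"
      using xv_mult[OF ic c] by simp
    also have "\<dots> = xv (\<lambda>U. \<one>) S" using c by simp
    also have "\<dots> = \<one>" by (rule xv_one)
    finally have e: "xv (\<lambda>U. inv (c U)) S \<otimes> xv c S = \<one>" .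
    have "inv (xv c S) = xv (\<lambda>U. inv (c U)) S"
      by (rule inv_equality[OF e xv_closed[OF c] xv_closed[OF ic]])
    then show ?thesis by simp
  qed
  have Rsub: "subgroup R E.PP"
  proof (rule group.subgroupI[OF E.group_PP])
    show "R \<subseteq> carrier E.PP" by (rule RC)
    show "R \<noteq> {}" using Rmem[of "\<lambda>U. \<one>"] by auto
  next
    fix x assume "x \<in> R"
    then obtain c where c: "\<forall>U. c U \<in> carrier C" and x: "x = (\<lambda>j\<in>{..<t}. xv c (\<sigma> j))"
      unfolding R_def by blast
    have "inv\<^bsub>E.PP\<^esub> x = (\<lambda>j\<in>{..<t}. xv (\<lambda>U. inv (c U)) (\<sigma> j))"
    proof -
      have xP: "x \<in> carrier E.PP" using RC \<open>x \<in> R\<close> by auto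
      show ?thesis unfolding E.inv_PP[OF xP] unfolding x by (intro restrict_ext) (simp add: xv_inv[OF c])
    qed
    then show "inv\<^bsub>E.PP\<^esub> x \<in> R" using Rmem[of "\<lambda>U. inv (c U)"] c by simp
  next
    fix x y assume "x \<in> R" "y \<in> R"
    then obtain c d where c: "\<forall>U. c U \<in> carrier C" and x: "x = (\<lambda>j\<in>{..<t}. xv c (\<sigma> j))"
      and d: "\<forall>U. d U \<in> carrier C" and y: "y = (\<lambda>j\<in>{..<t}. xv d (\<sigma> j))"
      unfolding R_def by blast
    have "x \<otimes>\<^bsub>E.PP\<^esub> y = (\<lambda>j\<in>{..<t}. xv (\<lambda>U. c U \<otimes> d U) (\<sigma> j))"
      unfolding E.mult_PP x y by (intro restrict_ext) (simp add: xv_mult[OF c d])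
    then show "x \<otimes>\<^bsub>E.PP\<^esub> y \<in> R" using Rmem[of "\<lambda>U. c U \<otimes> d U"] c d by simp
  qed
  have Rinv: "\<forall>\<phi>\<in>hom C C. diag_map t \<phi> ` R \<subseteq> R"
  proof (intro ballI subsetI)
    fix \<phi> z assume phi: "\<phi> \<in> hom C C" and "z \<in> diag_map t \<phi> ` R"
    then obtain x where xR: "x \<in> R" and z: "z = diag_map t \<phi> x" by blast
    then obtain c where c: "\<forall>U. c U \<in> carrier C" and x: "x = (\<lambda>j\<in>{..<t}. xv c (\<sigma> j))"
      unfolding R_def by blast
    have pc: "\<forall>U. \<phi> (c U) \<in> carrier C" using c phi by (auto simp: hom_def)
    have "z = (\<lambda>j\<in>{..<t}. xv (\<lambda>U. \<phi> (c U)) (\<sigma> j))"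
      unfolding z x diag_map_def xv_def
      by (intro restrict_ext) (simp add: finprod_hom[OF phi finFs[OF \<sigma>fin]] c)
    then show "z \<in> R" using Rmem[OF pc] by simp
  qed
  have Ra: "\<forall>x\<in>R. \<exists>j<t. x j = \<one>"
  proof
    fix x assume "x \<in> R"
    then obtain c where c: "\<forall>U. c U \<in> carrier C" and x: "x = (\<lambda>j\<in>{..<t}. xv c (\<sigma> j))"
      unfolding R_def by blast
    obtain idx where idx: "bij_betw idx (carrier C) {0..<q}"
      using ex_bij_betw_finite_nat[OF fin] unfolding q_def by blast
    have idxinj: "inj_on idx (carrier C)" using idx by (auto simp: bij_betw_def)
    define f where "f U = idx (c U)" for U
    have fq: "\<forall>U. f U < q" unfolding f_def using idx c by (auto simp: bij_betw_def)
    obtain H where H: "H \<subseteq> {..<n}" "card H = s"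
      and hom: "\<forall>U V. U \<subseteq> H \<and> V \<subseteq> H \<and> card U = card V \<and> 1 \<le> card U \<and> card U \<le> k \<longrightarrow> f U = f V"
      using RN fq by blast
    have finH: "finite H" using H(1) finite_subset by blast
    have Hne: "H \<noteq> {}" using H(2) s_gt by auto
    have "H \<in> T" unfolding T_def using H(1) Hne by simp
    then obtain j where j: "j < t" "\<sigma> j = H" using \<sigma>surj by (metis imageE lessThan_iff)
    define L where "L r = {U. U \<subseteq> H \<and> card U = r}" for r
    have FsL: "Fs H = (\<Union>r\<in>{1..k}. L r)"
    proof
      show "Fs H \<subseteq> (\<Union>r\<in>{1..k}. L r)"
      proof
        fix U assume "U \<in> Fs H"
        then have U: "U \<subseteq> H" "U \<noteq> {}" "card U \<le> k" unfolding Fs_def by auto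
        then have "finite U" using finH finite_subset by blast
        then have "1 \<le> card U" using U(2) by (simp add: Suc_le_eq card_gt_0_iff)
        then show "U \<in> (\<Union>r\<in>{1..k}. L r)" using U unfolding L_def by auto
      qed
      show "(\<Union>r\<in>{1..k}. L r) \<subseteq> Fs H" unfolding L_def Fs_def by auto
    qed
    have level: "finprod C c (L r) = \<one>" if r: "r \<in> {1..k}" for r
    proof -
      have rH: "r \<le> card H" using r H(2) s_gt by simp
      obtain U0 where U0: "U0 \<subseteq> H" "card U0 = r" "finite U0" by (rule obtain_subset_with_card_n[OF rH])
      have cU0: "c U0 \<in> carrier C" using c by simp
      have eq: "c U = c U0" if "U \<in> L r" for U
      proof -
        have "f U = f U0" using hom that U0 r unfolding L_def by auto
        then show ?thesis using idxinj c unfolding f_def by (auto simp: inj_on_def)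
      qed
      have "finprod C c (L r) = finprod C (\<lambda>U. c U0) (L r)"
        by (rule finprod_cong') (use eq cU0 in auto)
      also have "\<dots> = c U0 [^] card (L r)" by (rule finprod_const[OF cU0])
      also have "card (L r) = s choose r" unfolding L_def using n_subsets[OF finH, of r] H(2) by simp
      also have "p dvd (s choose r)" unfolding s_def
        using p_prime r s_gt unfolding s_def by (intro prime_dvd_choose_pow) auto
      then obtain z where "s choose r = p * z" by (auto elim: dvdE)
      then have "c U0 [^] (s choose r) = (c U0 [^] p) [^] z" using cU0 by (simp add: nat_pow_pow)
      also have "\<dots> = \<one>" using expo cU0 by simp
      finally show ?thesis .
    qed
    have "x j = xv c H" unfolding x using j by simp
    also have "\<dots> = finprod C (\<lambda>r. finprod C c (L r)) {1..k}"
      unfolding xv_def FsL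
    proof (rule finprod_UN_disjoint)
      show "finite {1..k}" by simp
      show "\<And>i. i \<in> {1..k} \<Longrightarrow> finite (L i)"
        unfolding L_def using finH by (auto intro: finite_subset[of _ "Pow H"])
      show "pairwise (\<lambda>i j. disjnt (L i) (L j)) {1..k}"
        unfolding L_def by (auto simp: pairwise_def disjnt_def)
      show "\<And>i x. i \<in> {1..k} \<Longrightarrow> x \<in> L i \<Longrightarrow> c x \<in> carrier C" using c by simp
    qed
    also have "\<dots> = finprod C (\<lambda>r. \<one>) {1..k}" by (rule finprod_cong') (use level in auto)
    also have "\<dots> = \<one>" by simp
    finally show "\<exists>j<t. x j = \<one>" using j by blast
  qed
  have interp: "\<forall>J. J \<subseteq> {..<t} \<longrightarrow> card J = N \<longrightarrow> N \<le> k \<longrightarrow> (\<forall>y\<in>carrier E.PP. \<exists>x\<in>R. \<forall>j\<in>J. x j = y j)" for N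
  proof (induction N)
    case 0
    show ?case
    proof (intro allI impI ballI)
      fix J y assume J: "J \<subseteq> {..<t}" "card J = 0"
      then have "J = {}" using finite_subset[OF J(1)] by auto
      then show "\<exists>x\<in>R. \<forall>j\<in>J. x j = y j" using subgroup.one_closed[OF Rsub] by blast
    qed
  next
    case (Suc N)
    show ?case
    proof (intro allI impI ballI)
      fix J y assume J: "J \<subseteq> {..<t}" and cJ: "card J = Suc N" and Nk: "Suc N \<le> k" and y: "y \<in> carrier E.PP"
      have finJ: "finite J" using J finite_subset by blast
      have Jne: "J \<noteq> {}" using cJ by auto
      define M where "M = Max ((\<lambda>b. card (\<sigma> b)) ` J)"
      have "M \<in> (\<lambda>b. card (\<sigma> b)) ` J" unfolding M_def using finJ Jne by (intro Max_in) auto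
      then obtain a where aJ: "a \<in> J" and aM: "card (\<sigma> a) = M" by auto
      have amax: "card (\<sigma> b) \<le> card (\<sigma> a)" if "b \<in> J" for b
        unfolding aM M_def using finJ that by (intro Max_ge) auto
      have at: "a < t" using aJ J by auto
      define J0 where "J0 = J - {a}"
      have J0: "J0 \<subseteq> {..<t}" "card J0 = N" "N \<le> k" using J cJ Nk aJ finJ unfolding J0_def by auto
      obtain x0 where x0R: "x0 \<in> R" and x0J: "\<forall>j\<in>J0. x0 j = y j" using Suc.IH J0 y by blast
      have nsub: "\<not> \<sigma> a \<subseteq> \<sigma> b" if b: "b \<in> J0" for b
      proof
        assume sub: "\<sigma> a \<subseteq> \<sigma> b"
        have bt: "b < t" "b \<in> J" using b J unfolding J0_def by auto
        have "\<sigma> a = \<sigma> b" using card_subset_eq[OF \<sigma>fin[OF bt(1)] sub] amax[OF bt(2)] card_mono[OF \<sigma>fin[OF bt(1)] sub]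
          by simp
        then have "a = b" using \<sigma>inj at bt(1) by (auto simp: inj_on_def)
        then show False using b unfolding J0_def by simp
      qed
      define sep where "sep b = (SOME i. i \<in> \<sigma> a \<and> i \<notin> \<sigma> b)" for b
      have sepP: "sep b \<in> \<sigma> a \<and> sep b \<notin> \<sigma> b" if "b \<in> J0" for b
        unfolding sep_def using nsub[OF that] by (metis (no_types, lifting) someI_ex subsetI)
      have sa: "\<sigma> a \<in> T" using \<sigma>T[OF at] .
      then obtain i0 where i0: "i0 \<in> \<sigma> a" unfolding T_def by auto
      define A where "A = insert i0 (sep ` J0)"
      have Asub: "A \<subseteq> \<sigma> a" unfolding A_def using i0 sepP by auto
      have Ane: "A \<noteq> {}" unfolding A_def by simp
      have finJ0: "finite J0" using finJ unfolding J0_def by simp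
      have Ak: "card A \<le> k"
      proof -
        have "card A \<le> Suc (card (sep ` J0))" unfolding A_def by (rule card_insert_le_m1) auto
        also have "card (sep ` J0) \<le> card J0" by (rule card_image_le[OF finJ0])
        finally show ?thesis using J0 Nk by simp
      qed
      have yC: "y j \<in> carrier C" if "j < t" for j using y that by (auto simp: E.carrier_PP PiE_iff)
      have x0P: "x0 \<in> carrier E.PP" using x0R RC by auto
      have x0C: "x0 j \<in> carrier C" if "j < t" for j using x0P that by (auto simp: E.carrier_PP PiE_iff)
      define c0 where "c0 = y a \<otimes> inv (x0 a)"
      have c0C: "c0 \<in> carrier C" unfolding c0_def using yC[OF at] x0C[OF at] by simp
      define cA where "cA U = (if U = A then c0 else \<one>)" for U
      have cAC: "\<forall>U. cA U \<in> carrier C" unfolding cA_def using c0C by simp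
      have xvA: "xv cA S = (if A \<subseteq> S then c0 else \<one>)" if S: "finite S" for S
      proof (cases "A \<subseteq> S")
        case True
        have "A \<in> Fs S" unfolding Fs_def using True Ane Ak by simp
        then have "xv cA S = c0" unfolding xv_def cA_def
          using finprod_singleton_swap[of A "Fs S" "\<lambda>_. c0"] finFs[OF S] c0C by simp
        then show ?thesis using True by simp
      next
        case False
        have "xv cA S = finprod C (\<lambda>U. \<one>) (Fs S)" unfolding xv_def
          by (rule finprod_cong') (use False in \<open>auto simp: cA_def Fs_def\<close>)
        then show ?thesis using False by simp
      qed
      define m where "m = (\<lambda>j\<in>{..<t}. xv cA (\<sigma> j))"
      have mR: "m \<in> R" unfolding m_def by (rule Rmem[OF cAC])
      define x where "x = x0 \<otimes>\<^bsub>E.PP\<^esub> m"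
      have xR: "x \<in> R" unfolding x_def by (rule subgroup.m_closed[OF Rsub x0R mR])
      have "\<forall>j\<in>J. x j = y j"
      proof
        fix j assume jJ: "j \<in> J"
        then have jt: "j < t" using J by auto
        have xj: "x j = x0 j \<otimes> xv cA (\<sigma> j)" unfolding x_def m_def E.mult_PP using jt by simp
        show "x j = y j"
        proof (cases "j = a")
          case True
          have "xv cA (\<sigma> j) = c0" using xvA[OF \<sigma>fin[OF jt]] Asub True by simp
          then have "x j = x0 a \<otimes> (y a \<otimes> inv (x0 a))" using xj True unfolding c0_def by simp
          also have "\<dots> = y a \<otimes> (x0 a \<otimes> inv (x0 a))"
            by (rule m_lcomm[OF x0C[OF at] yC[OF at] inv_closed[OF x0C[OF at]]])
          also have "\<dots> = y a" using x0C[OF at] yC[OF at] by simp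
          finally show ?thesis using True by simp
        next
          case False
          then have jJ0: "j \<in> J0" using jJ unfolding J0_def by simp
          have "sep j \<in> A" unfolding A_def using jJ0 by simp
          then have "\<not> A \<subseteq> \<sigma> j" using sepP[OF jJ0] by blast
          then have "xv cA (\<sigma> j) = \<one>" using xvA[OF \<sigma>fin[OF jt]] by simp
          then show ?thesis using xj x0J jJ0 x0C[OF jt] by simp
        qed
      qed
      then show "\<exists>x\<in>R. \<forall>j\<in>J. x j = y j" using xR by blast
    qed
  qed
  have Rb: "R <#>\<^bsub>E.PP\<^esub> E.QQ J = carrier E.PP" if J: "J \<subseteq> {..<t}" "card J = k" for J
  proof
    show "R <#>\<^bsub>E.PP\<^esub> E.QQ J \<subseteq> carrier E.PP"
      using RC E.QQ_iff[OF J(1)] by (auto simp: E.set_mult_iff intro!: G.m_closed)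
    show "carrier E.PP \<subseteq> R <#>\<^bsub>E.PP\<^esub> E.QQ J"
    proof
      fix g assume g: "g \<in> carrier E.PP"
      obtain x where xR: "x \<in> R" and xJ: "\<forall>j\<in>J. x j = g j" using interp[of k] J g by blast
      have xP: "x \<in> carrier E.PP" using xR RC by auto
      define qq where "qq = inv\<^bsub>E.PP\<^esub> x \<otimes>\<^bsub>E.PP\<^esub> g"
      have "qq \<in> E.QQ J"
        unfolding E.QQ_iff[OF J(1)]
      proof
        show "qq \<in> carrier E.PP" unfolding qq_def using xP g by simp
        show "\<forall>j\<in>J. qq j = \<one>"
        proof
          fix j assume jJ: "j \<in> J"
          then have jt: "j < t" using J by auto
          have gC: "g j \<in> carrier C" using g jt by (auto simp: E.carrier_PP PiE_iff)
          have "qq j = inv (x j) \<otimes> g j" unfolding qq_def using xP jt by (simp add: E.inv_PP E.mult_PP)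
          then show "qq j = \<one>" using xJ jJ gC by simp
        qed
      qed
      moreover have "g = x \<otimes>\<^bsub>E.PP\<^esub> qq" unfolding qq_def using xP g by (simp add: G.m_assoc[symmetric])
      ultimately show "g \<in> R <#>\<^bsub>E.PP\<^esub> E.QQ J" using xR by (auto simp: E.set_mult_iff)
    qed
  qed
  have Rb': "\<exists>J'. J \<subseteq> J' \<and> J' \<subseteq> {..<t}
             \<and> R \<inter> coord_subprod C t ({..<t} - J') = {\<one>\<^bsub>Pow_group C t\<^esub>}
             \<and> R <#>\<^bsub>Pow_group C t\<^esub> coord_subprod C t ({..<t} - J') = carrier (Pow_group C t)
             \<and> (\<exists>(n :: nat \<Rightarrow> nat \<Rightarrow> int) \<pi>.
                  \<pi> \<in> hom (Pow_group C t) (Pow_group C t)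
                  \<and> \<pi> ` carrier (Pow_group C t) = coord_subprod C t ({..<t} - J')
                  \<and> (\<forall>x\<in>carrier (Pow_group C t). \<pi> x = \<one>\<^bsub>Pow_group C t\<^esub> \<longleftrightarrow> x \<in> R)
                  \<and> (\<forall>q\<in>coord_subprod C t ({..<t} - J'). \<pi> q = q)
                  \<and> (\<forall>i<t. \<forall>c\<in>carrier C.
                       \<pi> (coord_embed C t i c)
                       = (\<lambda>j\<in>{..<t}. if j \<notin> J' then c [^]\<^bsub>C\<^esub> (n i j) else \<one>\<^bsub>C\<^esub>)))"
    if J: "J \<subseteq> {..<t}" "card J = k" for J
  proof -
    obtain J' where J': "J \<subseteq> J'" "J' \<subseteq> {..<t}" "R \<inter> E.QQ J' = {\<one>\<^bsub>E.PP\<^esub>}" "R <#>\<^bsub>E.PP\<^esub> E.QQ J' = carrier E.PP"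
      using E.extend[OF Rsub Rinv J(1) Rb[OF J]] by blast
    show ?thesis using J' E.bprime[OF Rsub Rinv J'(2) J'(3) J'(4)] by blast
  qed
  show ?thesis
    by (rule exI[of _ t], rule conjI[OF t_ge], rule exI[of _ R]) (use Rsub Rinv Ra Rb Rb' in blast)
qed

end

theorem mainTheorem9:
  fixes C :: "('a, 'b) monoid_scheme" and p k :: nat
  assumes "Factorial_Ring.prime p" and "comm_group C" and "finite (carrier C)"
    and "\<forall>x\<in>carrier C. x [^]\<^bsub>C\<^esub> p = \<one>\<^bsub>C\<^esub>"
    and "k > 0"
  shows "\<exists>t\<ge>k. \<exists>R.
    subgroup R (Pow_group C t)
    \<and> (\<forall>\<phi>\<in>hom C C. diag_map t \<phi> ` R \<subseteq> R)
    \<and> (\<forall>x\<in>R. \<exists>j<t. x j = \<one>\<^bsub>C\<^esub>)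
    \<and> (\<forall>J. J \<subseteq> {..<t} \<and> card J = k \<longrightarrow>
          R <#>\<^bsub>Pow_group C t\<^esub> coord_subprod C t ({..<t} - J) = carrier (Pow_group C t))
    \<and> (\<forall>J. J \<subseteq> {..<t} \<and> card J = k \<longrightarrow>
          (\<exists>J'. J \<subseteq> J' \<and> J' \<subseteq> {..<t}
             \<and> R \<inter> coord_subprod C t ({..<t} - J') = {\<one>\<^bsub>Pow_group C t\<^esub>}
             \<and> R <#>\<^bsub>Pow_group C t\<^esub> coord_subprod C t ({..<t} - J') = carrier (Pow_group C t)
             \<and> (\<exists>(n :: nat \<Rightarrow> nat \<Rightarrow> int) \<pi>.
                  \<pi> \<in> hom (Pow_group C t) (Pow_group C t)
                  \<and> \<pi> ` carrier (Pow_group C t) = coord_subprod C t ({..<t} - J')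
                  \<and> (\<forall>x\<in>carrier (Pow_group C t). \<pi> x = \<one>\<^bsub>Pow_group C t\<^esub> \<longleftrightarrow> x \<in> R)
                  \<and> (\<forall>q\<in>coord_subprod C t ({..<t} - J'). \<pi> q = q)
                  \<and> (\<forall>i<t. \<forall>c\<in>carrier C.
                       \<pi> (coord_embed C t i c)
                       = (\<lambda>j\<in>{..<t}. if j \<notin> J' then c [^]\<^bsub>C\<^esub> (n i j) else \<one>\<^bsub>C\<^esub>)))))"
proof -
  have "elab C p" unfolding elab_def elab_axioms_def using assms by auto
  then show ?thesis by (rule elab.main_elab[OF _ assms(5)])
qed

end
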